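(* Let $\mathbb{V}$ and $\mathbb{V}'$ be varieties with signatures $\mathcal{F}\subseteq\mathcal{F}'$ and defining sets of identities $\Sigma\subseteq\Sigma'$ respectively, and suppose $\mathbb{V}$ is BIT speciale with terms $0,\alpha_1,\dots,\alpha_n,\theta$. Let $T$ be any set of ideal terms determining ideals in $\mathbb{V}$. (a) The union of $T$ with the set of terms $$\alpha_i\big(\tau(\theta(y_{11},\dots,y_{1n},x_1),\dots,\theta(y_{k1},\dots,y_{kn},x_k)),\ \tau(x_1,\dots,x_k)\big),$$ for all $\tau\in\mathcal{F}'\setminus\mathcal{F}$ (of arity $k$) and all $1\le i\le n$, determines ideals in $\mathbb{V}'$. (b) The union of $T$ with the set of terms $$\alpha_i\big(\tau(x_1,\dots,x_{j-1},\theta(y_1,\dots,y_n,x_j),x_{j+1},\dots,x_k),\ \tau(x_1,\dots,x_k)\big),$$ for all $\tau\in\mathcal{F}'\setminus\mathcal{F}$ (of arity $k$) and all $1\le i\le n$, $1\le j\le k$, determines ideals in $\mathbb{V}'$. (In the displayed terms the $y$-variables are the ideal variables and the $x$-variables are parameters.)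
   Context: BIT speciale: the algebraic theory contains a constant $0$ and, for some $n\ge1$, binary terms $\alpha_1,\dots,\alpha_n$ and an $(n+1)$-ary term $\theta$ such that $\alpha_i(x,x)=0$ and $\theta(\alpha_1(x,y),\dots,\alpha_n(x,y),y)=x$ are identities; $\mathbb{V}'$ is then BIT speciale with the same terms. For a variety $\mathbb{W}$ with signature $\mathcal{G}$: an ideal term of $\mathbb{W}$ in the variables $y_1,\dots,y_p$ is a term $t(x_1,\dots,x_m,y_1,\dots,y_p)$ over $\mathcal{G}$ with $t(x_1,\dots,x_m,0,\dots,0)=0$ an identity of $\mathbb{W}$; a non-empty subset $H$ of a $\mathbb{W}$-algebra $A$ is an ideal if $t(a_1,\dots,a_m,b_1,\dots,b_p)\in H$ for every ideal term $t$, all $a_r\in A$, $b_s\in H$. A set $T$ of ideal terms determines ideals in $\mathbb{W}$ if for every $\mathbb{W}$-algebra $A$, a non-empty $H\subseteq A$ is an ideal iff every $t\in T$ takes values in $H$ whenever its $x$-variables are assigned elements of $A$ and its $y$-variables elements of $H$. *)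

theory Defs
  imports Main
begin

datatype 'f trm = Var nat | App 'f "'f trm list"

fun vars :: "'f trm \<Rightarrow> nat set" where
  "vars (Var v) = {v}"
| "vars (App f ts) = (\<Union>t\<in>set ts. vars t)"

fun wf_trm :: "('f \<Rightarrow> nat) \<Rightarrow> 'f set \<Rightarrow> 'f trm \<Rightarrow> bool" where
  "wf_trm ar F (Var v) = True"
| "wf_trm ar F (App f ts) = (f \<in> F \<and> length ts = ar f \<and> (\<forall>t\<in>set ts. wf_trm ar F t))"

fun subst :: "(nat \<Rightarrow> 'f trm) \<Rightarrow> 'f trm \<Rightarrow> 'f trm" where
  "subst \<sigma> (Var v) = \<sigma> v"
| "subst \<sigma> (App f ts) = App f (map (subst \<sigma>) ts)"

fun eval :: "('f \<Rightarrow> 'a list \<Rightarrow> 'a) \<Rightarrow> (nat \<Rightarrow> 'a) \<Rightarrow> 'f trm \<Rightarrow> 'a" where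
  "eval I \<rho> (Var v) = \<rho> v"
| "eval I \<rho> (App f ts) = I f (map (eval I \<rho>) ts)"

definition is_alg :: "('f \<Rightarrow> nat) \<Rightarrow> 'f set \<Rightarrow> 'a set \<Rightarrow> ('f \<Rightarrow> 'a list \<Rightarrow> 'a) \<Rightarrow> bool" where
  "is_alg ar F A I \<longleftrightarrow> A \<noteq> {} \<and>
     (\<forall>f\<in>F. \<forall>as. length as = ar f \<longrightarrow> set as \<subseteq> A \<longrightarrow> I f as \<in> A)"

definition satisfies :: "'a set \<Rightarrow> ('f \<Rightarrow> 'a list \<Rightarrow> 'a) \<Rightarrow> ('f trm \<times> 'f trm) set \<Rightarrow> bool" where
  "satisfies A I E \<longleftrightarrow>
     (\<forall>(s,t)\<in>E. \<forall>\<rho>. (\<forall>v. \<rho> v \<in> A) \<longrightarrow> eval I \<rho> s = eval I \<rho> t)"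

definition variety_alg :: "('f \<Rightarrow> nat) \<Rightarrow> 'f set \<Rightarrow> ('f trm \<times> 'f trm) set
    \<Rightarrow> 'a set \<Rightarrow> ('f \<Rightarrow> 'a list \<Rightarrow> 'a) \<Rightarrow> bool" where
  "variety_alg ar F E A I \<longleftrightarrow> is_alg ar F A I \<and> satisfies A I E"

inductive eqc :: "('f \<Rightarrow> nat) \<Rightarrow> 'f set \<Rightarrow> ('f trm \<times> 'f trm) set \<Rightarrow> 'f trm \<Rightarrow> 'f trm \<Rightarrow> bool"
  for ar F E where
  ax: "(s, t) \<in> E \<Longrightarrow> (\<forall>v. wf_trm ar F (\<sigma> v)) \<Longrightarrow> eqc ar F E (subst \<sigma> s) (subst \<sigma> t)"
| refl: "wf_trm ar F t \<Longrightarrow> eqc ar F E t t"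
| sym: "eqc ar F E s t \<Longrightarrow> eqc ar F E t s"
| trans: "eqc ar F E s t \<Longrightarrow> eqc ar F E t u \<Longrightarrow> eqc ar F E s u"
| cong: "f \<in> F \<Longrightarrow> length ss = ar f \<Longrightarrow> list_all2 (eqc ar F E) ss ts
          \<Longrightarrow> eqc ar F E (App f ss) (App f ts)"

definition alpha_app :: "'f trm \<Rightarrow> 'f trm \<Rightarrow> 'f trm \<Rightarrow> 'f trm" where
  "alpha_app \<alpha> s t = subst (\<lambda>v. if v = 0 then s else if v = 1 then t else Var v) \<alpha>"

definition theta_app :: "'f trm \<Rightarrow> 'f trm list \<Rightarrow> 'f trm" where
  "theta_app \<theta> ss = subst (\<lambda>v. if v < length ss then ss ! v else Var v) \<theta>"

definition bit_speciale :: "('f \<Rightarrow> nat) \<Rightarrow> 'f set \<Rightarrow> ('f trm \<times> 'f trm) set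
    \<Rightarrow> 'f trm \<Rightarrow> 'f trm list \<Rightarrow> 'f trm \<Rightarrow> nat \<Rightarrow> bool" where
  "bit_speciale ar F E zero \<alpha>s \<theta> n \<longleftrightarrow>
     n \<ge> 1 \<and> length \<alpha>s = n \<and>
     wf_trm ar F zero \<and> vars zero = {} \<and>
     (\<forall>\<alpha>\<in>set \<alpha>s. wf_trm ar F \<alpha> \<and> vars \<alpha> \<subseteq> {0, 1}) \<and>
     wf_trm ar F \<theta> \<and> vars \<theta> \<subseteq> {0..n} \<and>
     (\<forall>\<alpha>\<in>set \<alpha>s. eqc ar F E (alpha_app \<alpha> (Var 0) (Var 0)) zero) \<and>
     eqc ar F E (theta_app \<theta> (map (\<lambda>\<alpha>. alpha_app \<alpha> (Var 0) (Var 1)) \<alpha>s @ [Var 1])) (Var 0)"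

text \<open>An ideal term is a term t together with the set Y of its ideal variables;
  the remaining variables are the parameters.\<close>
definition ideal_term :: "('f \<Rightarrow> nat) \<Rightarrow> 'f set \<Rightarrow> ('f trm \<times> 'f trm) set
    \<Rightarrow> 'f trm \<Rightarrow> 'f trm \<Rightarrow> nat set \<Rightarrow> bool" where
  "ideal_term ar G E zero t Y \<longleftrightarrow> wf_trm ar G t \<and>
     eqc ar G E (subst (\<lambda>v. if v \<in> Y then zero else Var v) t) zero"

definition closed_under :: "('f \<Rightarrow> 'a list \<Rightarrow> 'a) \<Rightarrow> 'a set \<Rightarrow> 'a set \<Rightarrow> 'f trm \<Rightarrow> nat set \<Rightarrow> bool" where
  "closed_under I A H t Y \<longleftrightarrow>
     (\<forall>\<rho>. (\<forall>v. \<rho> v \<in> A) \<longrightarrow> (\<forall>v\<in>Y. \<rho> v \<in> H) \<longrightarrow> eval I \<rho> t \<in> H)"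

definition is_ideal :: "('f \<Rightarrow> nat) \<Rightarrow> 'f set \<Rightarrow> ('f trm \<times> 'f trm) set \<Rightarrow> 'f trm
    \<Rightarrow> 'a set \<Rightarrow> ('f \<Rightarrow> 'a list \<Rightarrow> 'a) \<Rightarrow> 'a set \<Rightarrow> bool" where
  "is_ideal ar G E zero A I H \<longleftrightarrow> H \<noteq> {} \<and> H \<subseteq> A \<and>
     (\<forall>t Y. ideal_term ar G E zero t Y \<longrightarrow> closed_under I A H t Y)"

text \<open>T determines ideals in the variety (G,E), for algebras with carrier in type 'a.\<close>
definition determines_ideals :: "'a itself \<Rightarrow> ('f \<Rightarrow> nat) \<Rightarrow> 'f set \<Rightarrow> ('f trm \<times> 'f trm) set
    \<Rightarrow> 'f trm \<Rightarrow> ('f trm \<times> nat set) set \<Rightarrow> bool" where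
  "determines_ideals (_::'a itself) ar G E zero T \<longleftrightarrow>
     (\<forall>(t, Y)\<in>T. ideal_term ar G E zero t Y) \<and>
     (\<forall>(A::'a set) I. variety_alg ar G E A I \<longrightarrow>
        (\<forall>H. H \<noteq> {} \<longrightarrow> H \<subseteq> A \<longrightarrow>
           (is_ideal ar G E zero A I H \<longleftrightarrow> (\<forall>(t, Y)\<in>T. closed_under I A H t Y))))"

text \<open>(a): x_j = Var j (j<k), y_{j l} = Var (k + j*n + l) (l<n); ideal variables {k..<k+k*n}.\<close>
definition terms_a :: "('f \<Rightarrow> nat) \<Rightarrow> 'f set \<Rightarrow> 'f set \<Rightarrow> 'f trm list \<Rightarrow> 'f trm \<Rightarrow> nat
    \<Rightarrow> ('f trm \<times> nat set) set" where
  "terms_a ar F F' \<alpha>s \<theta> n =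
     {(alpha_app (\<alpha>s ! i)
         (App \<tau> (map (\<lambda>j. theta_app \<theta> (map (\<lambda>l. Var (ar \<tau> + j * n + l)) [0..<n] @ [Var j]))
                     [0..<ar \<tau>]))
         (App \<tau> (map Var [0..<ar \<tau>])),
       {ar \<tau>..<ar \<tau> + ar \<tau> * n}) | \<tau> i. \<tau> \<in> F' - F \<and> i < n}"

text \<open>(b): x_j = Var j (j<k), y_l = Var (k + l) (l<n); ideal variables {k..<k+n}.\<close>
definition terms_b :: "('f \<Rightarrow> nat) \<Rightarrow> 'f set \<Rightarrow> 'f set \<Rightarrow> 'f trm list \<Rightarrow> 'f trm \<Rightarrow> nat
    \<Rightarrow> ('f trm \<times> nat set) set" where
  "terms_b ar F F' \<alpha>s \<theta> n =
     {(alpha_app (\<alpha>s ! i)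
         (App \<tau> ((map Var [0..<ar \<tau>])[j := theta_app \<theta> (map (\<lambda>l. Var (ar \<tau> + l)) [0..<n] @ [Var j])]))
         (App \<tau> (map Var [0..<ar \<tau>])),
       {ar \<tau>..<ar \<tau> + n}) | \<tau> i j. \<tau> \<in> F' - F \<and> i < n \<and> j < ar \<tau>}"

end

theory Submission
  imports Defs
begin


lemma subst_subst: "subst \<sigma> (subst \<tau> t) = subst (\<lambda>v. subst \<sigma> (\<tau> v)) t"
  by (induction t) auto

lemma subst_cong: "(\<And>v. v \<in> vars t \<Longrightarrow> \<sigma> v = \<sigma>' v) \<Longrightarrow> subst \<sigma> t = subst \<sigma>' t"
  by (induction t) auto

lemma subst_Var: "subst Var t = t"
  by (induction t) (auto simp: map_idI)

lemma wf_subst: "wf_trm ar G t \<Longrightarrow> (\<And>v. v \<in> vars t \<Longrightarrow> wf_trm ar G (\<sigma> v)) \<Longrightarrow> wf_trm ar G (subst \<sigma> t)"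
  by (induction t) auto

lemma wf_mono: "F \<subseteq> G \<Longrightarrow> wf_trm ar F t \<Longrightarrow> wf_trm ar G t"
  by (induction t) auto

lemma eval_subst: "eval I \<rho> (subst \<sigma> t) = eval I (\<lambda>v. eval I \<rho> (\<sigma> v)) t"
  by (induction t) (simp_all cong: map_cong)

lemma eval_cong: "(\<And>v. v \<in> vars t \<Longrightarrow> \<rho> v = \<rho>' v) \<Longrightarrow> eval I \<rho> t = eval I \<rho>' t"
proof (induction t)
  case (App f ts)
  have "\<forall>x\<in>set ts. eval I \<rho> x = eval I \<rho>' x"
    using App by auto
  then have "map (eval I \<rho>) ts = map (eval I \<rho>') ts"
    by (auto intro: map_cong)
  then show ?case by (metis eval.simps(2))
qed simp

lemma eval_in: "is_alg ar G A I \<Longrightarrow> wf_trm ar G t \<Longrightarrow> (\<And>v. \<rho> v \<in> A) \<Longrightarrow> eval I \<rho> t \<in> A"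
proof (induction t)
  case (App f ts)
  have "set (map (eval I \<rho>) ts) \<subseteq> A" using App by auto
  then show ?case using App unfolding is_alg_def by simp
qed simp

lemma eqc_mono:
  assumes "eqc ar F E s t" "F \<subseteq> G" "E \<subseteq> E'"
  shows "eqc ar G E' s t"
  using assms(1)
proof induction
  case (ax s t \<sigma>)
  have "\<And>v. wf_trm ar G (\<sigma> v)" using ax(2) wf_mono[OF assms(2)] by blast
  then show ?case using ax(1) assms(3) by (intro eqc.ax) auto
next
  case (refl t) then show ?case using wf_mono[OF assms(2)] by (intro eqc.refl) auto
next
  case (sym s t) then show ?case by (metis eqc.sym)
next
  case (trans s t u) then show ?case by (metis eqc.trans)
next
  case (cong f ss ts)
  have "list_all2 (eqc ar G E') ss ts" using cong(3) by (rule list_all2_mono) simp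
  then show ?case using cong assms(2) by (intro eqc.cong) auto
qed

lemma eqc_inst:
  assumes "eqc ar G E s t" "\<And>v. wf_trm ar G (\<sigma> v)"
  shows "eqc ar G E (subst \<sigma> s) (subst \<sigma> t)"
  using assms(1)
proof induction
  case (ax s t \<tau>)
  have "eqc ar G E (subst (\<lambda>v. subst \<sigma> (\<tau> v)) s) (subst (\<lambda>v. subst \<sigma> (\<tau> v)) t)"
    using ax assms(2) by (intro eqc.ax) (auto intro!: wf_subst)
  then show ?case by (simp add: subst_subst)
next
  case (refl t) then show ?case using assms by (auto intro!: eqc.refl wf_subst)
next
  case (sym s t) then show ?case by (metis eqc.sym)
next
  case (trans s t u) then show ?case by (metis eqc.trans)
next
  case (cong f ss ts)
  have "list_all2 (eqc ar G E) (map (subst \<sigma>) ss) (map (subst \<sigma>) ts)"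
    unfolding list_all2_map1 list_all2_map2 using cong(3) by (rule list_all2_mono) simp
  then show ?case using cong by (simp add: eqc.cong)
qed

lemma eqc_ctx:
  assumes "wf_trm ar G t" "\<And>v. v \<in> vars t \<Longrightarrow> eqc ar G E (\<sigma> v) (\<sigma>' v)"
  shows "eqc ar G E (subst \<sigma> t) (subst \<sigma>' t)"
  using assms
proof (induction t)
  case (Var x) then show ?case by simp
next
  case (App f ts)
  have "\<forall>x\<in>set ts. eqc ar G E (subst \<sigma> x) (subst \<sigma>' x)"
    using App by auto
  then show ?case using App
    by (auto intro!: eqc.cong simp: list_all2_map1 list_all2_map2 list_all2_same)
qed

lemma eqc_sound:
  assumes "eqc ar G E s t" "is_alg ar G A I" "satisfies A I E" "\<And>v. \<rho> v \<in> A"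
  shows "eval I \<rho> s = eval I \<rho> t"
  using assms(1,4)
proof (induction arbitrary: \<rho>)
  case (ax s t \<sigma>)
  have "\<And>v. eval I \<rho> (\<sigma> v) \<in> A" using ax assms(2) by (auto intro!: eval_in)
  then show ?case using ax assms(3) by (auto simp: eval_subst satisfies_def)
next
  case (cong f ss ts)
  have l: "length ss = length ts" using cong(3) by (rule list_all2_lengthD)
  have "\<forall>i<length ss. eval I \<rho> (ss!i) = eval I \<rho> (ts!i)"
    using cong(3,4) list_all2_nthD by blast
  then have "map (eval I \<rho>) ss = map (eval I \<rho>) ts"
    using l by (simp add: list_eq_iff_nth_eq)
  then show ?case by simp
qed auto



lemma subst_closed: "vars t = {} \<Longrightarrow> subst \<sigma> t = t"
  using subst_cong[of t \<sigma> Var] subst_Var by auto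

lemma alpha_subst: "vars \<alpha> \<subseteq> {0,1} \<Longrightarrow>
   subst \<sigma> (alpha_app \<alpha> s t) = alpha_app \<alpha> (subst \<sigma> s) (subst \<sigma> t)"
  unfolding alpha_app_def by (auto simp: subst_subst intro!: subst_cong)

lemma theta_subst: "vars \<theta> \<subseteq> {0..<length L} \<Longrightarrow>
   subst \<sigma> (theta_app \<theta> L) = theta_app \<theta> (map (subst \<sigma>) L)"
  unfolding theta_app_def by (auto simp: subst_subst intro!: subst_cong)

lemma eval_alpha: "vars \<alpha> \<subseteq> {0,1} \<Longrightarrow>
   eval I \<rho> (alpha_app \<alpha> s t) = eval I (\<lambda>v. if v = 0 then eval I \<rho> s else eval I \<rho> t) \<alpha>"
  unfolding alpha_app_def by (auto simp: eval_subst intro!: eval_cong)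

lemma eval_theta: "vars \<theta> \<subseteq> {0..<length L} \<Longrightarrow>
   eval I \<rho> (theta_app \<theta> L) = eval I (\<lambda>v. eval I \<rho> (L ! v)) \<theta>"
  unfolding theta_app_def by (auto simp: eval_subst intro!: eval_cong)

lemma wf_alpha: "wf_trm ar G \<alpha> \<Longrightarrow> wf_trm ar G s \<Longrightarrow> wf_trm ar G t \<Longrightarrow>
   wf_trm ar G (alpha_app \<alpha> s t)"
  unfolding alpha_app_def by (auto intro!: wf_subst)

lemma wf_theta: "wf_trm ar G \<theta> \<Longrightarrow> (\<And>x. x \<in> set L \<Longrightarrow> wf_trm ar G x) \<Longrightarrow>
   wf_trm ar G (theta_app \<theta> L)"
  unfolding theta_app_def by (auto intro!: wf_subst)

lemma alpha_cong: "wf_trm ar G \<alpha> \<Longrightarrow> eqc ar G E s s' \<Longrightarrow> eqc ar G E t t' \<Longrightarrow>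
   eqc ar G E (alpha_app \<alpha> s t) (alpha_app \<alpha> s' t')"
  unfolding alpha_app_def by (rule eqc_ctx) (auto intro: eqc.refl)

lemma theta_cong: "wf_trm ar G \<theta> \<Longrightarrow> vars \<theta> \<subseteq> {0..<length L} \<Longrightarrow> list_all2 (eqc ar G E) L L' \<Longrightarrow>
   eqc ar G E (theta_app \<theta> L) (theta_app \<theta> L')"
  unfolding theta_app_def
  by (rule eqc_ctx) (auto simp: list_all2_conv_all_nth)

lemma bit_mono:
  assumes "bit_speciale ar F \<Sigma> zero \<alpha>s \<theta> n" "F \<subseteq> G" "\<Sigma> \<subseteq> E"
  shows "bit_speciale ar G E zero \<alpha>s \<theta> n"
proof -
  have w: "\<And>t. wf_trm ar F t \<Longrightarrow> wf_trm ar G t" using assms(2) by (rule wf_mono)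
  have e: "\<And>s t. eqc ar F \<Sigma> s t \<Longrightarrow> eqc ar G E s t" using assms(2,3) eqc_mono by blast
  show ?thesis using assms(1) unfolding bit_speciale_def using w e by blast
qed

lemma D1:
  assumes B: "bit_speciale ar G E zero \<alpha>s \<theta> n" and "\<alpha> \<in> set \<alpha>s" "wf_trm ar G s"
  shows "eqc ar G E (alpha_app \<alpha> s s) zero"
proof -
  have "eqc ar G E (alpha_app \<alpha> (Var 0) (Var 0)) zero" using B assms by (auto simp: bit_speciale_def)
  then have "eqc ar G E (subst (\<lambda>_. s) (alpha_app \<alpha> (Var 0) (Var 0))) (subst (\<lambda>_. s) zero)"
    using assms by (intro eqc_inst) auto
  moreover have "vars \<alpha> \<subseteq> {0,1}" "vars zero = {}" using B assms by (auto simp: bit_speciale_def)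
  ultimately show ?thesis by (simp add: alpha_subst subst_closed)
qed

lemma D2:
  assumes B: "bit_speciale ar G E zero \<alpha>s \<theta> n" and "wf_trm ar G s"
  shows "eqc ar G E (theta_app \<theta> (replicate n zero @ [s])) s"
proof -
  have th: "eqc ar G E (theta_app \<theta> (map (\<lambda>\<alpha>. alpha_app \<alpha> (Var 0) (Var 1)) \<alpha>s @ [Var 1])) (Var 0)"
    and len: "length \<alpha>s = n" and vt: "vars \<theta> \<subseteq> {0..n}" and wt: "wf_trm ar G \<theta>"
    and va: "\<forall>\<alpha>\<in>set \<alpha>s. wf_trm ar G \<alpha> \<and> vars \<alpha> \<subseteq> {0, 1}"
    using B by (auto simp: bit_speciale_def)
  have vt': "vars \<theta> \<subseteq> {0..<length (map (\<lambda>\<alpha>. alpha_app \<alpha> s s) \<alpha>s @ [s])}"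
    "vars \<theta> \<subseteq> {0..<length (map (\<lambda>\<alpha>. alpha_app \<alpha> (Var 0) (Var 1)) \<alpha>s @ [Var 1])}"
    using vt len by auto
  have "eqc ar G E (subst (\<lambda>_. s) (theta_app \<theta> (map (\<lambda>\<alpha>. alpha_app \<alpha> (Var 0) (Var 1)) \<alpha>s @ [Var 1])))
      (subst (\<lambda>_. s) (Var 0))"
    using th assms by (intro eqc_inst) auto
  also have "subst (\<lambda>_. s) (theta_app \<theta> (map (\<lambda>\<alpha>. alpha_app \<alpha> (Var 0) (Var 1)) \<alpha>s @ [Var 1]))
     = theta_app \<theta> (map (\<lambda>\<alpha>. alpha_app \<alpha> s s) \<alpha>s @ [s])"
  proof -
    have "map (subst (\<lambda>_. s) \<circ> (\<lambda>\<alpha>. alpha_app \<alpha> (Var 0) (Var 1))) \<alpha>s = map (\<lambda>\<alpha>. alpha_app \<alpha> s s) \<alpha>s"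
      using va by (auto simp: alpha_subst)
    then show ?thesis using theta_subst[OF vt'(2)]
      by (simp only: map_append map_map list.map subst.simps)
  qed
  finally have 1: "eqc ar G E (theta_app \<theta> (map (\<lambda>\<alpha>. alpha_app \<alpha> s s) \<alpha>s @ [s])) s" by simp
  have "list_all2 (eqc ar G E) (map (\<lambda>\<alpha>. alpha_app \<alpha> s s) \<alpha>s @ [s]) (replicate n zero @ [s])"
    using len D1[OF B _ assms(2)] assms(2)
    by (intro list_all2_appendI) (auto simp: list_all2_conv_all_nth intro: eqc.refl)
  then have "eqc ar G E (theta_app \<theta> (map (\<lambda>\<alpha>. alpha_app \<alpha> s s) \<alpha>s @ [s])) (theta_app \<theta> (replicate n zero @ [s]))"
    using wt vt'(1) by (intro theta_cong)
  then show ?thesis using 1 by (meson eqc.sym eqc.trans)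
qed



definition aop :: "('f \<Rightarrow> 'a list \<Rightarrow> 'a) \<Rightarrow> 'f trm \<Rightarrow> 'a \<Rightarrow> 'a \<Rightarrow> 'a" where
  "aop I \<alpha> a b = eval I (\<lambda>v. if v = 0 then a else b) \<alpha>"

definition tp :: "('f \<Rightarrow> 'a list \<Rightarrow> 'a) \<Rightarrow> 'f trm \<Rightarrow> nat \<Rightarrow> (nat \<Rightarrow> 'a) \<Rightarrow> 'a \<Rightarrow> 'a" where
  "tp I \<theta> n f b = eval I (\<lambda>v. if v < n then f v else b) \<theta>"

definition Rel :: "('f \<Rightarrow> 'a list \<Rightarrow> 'a) \<Rightarrow> 'f trm list \<Rightarrow> 'a set \<Rightarrow> 'a \<Rightarrow> 'a \<Rightarrow> bool" where
  "Rel I \<alpha>s H a b \<longleftrightarrow> (\<forall>\<alpha>\<in>set \<alpha>s. aop I \<alpha> a b \<in> H)"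

definition z0 :: "('f \<Rightarrow> 'a list \<Rightarrow> 'a) \<Rightarrow> 'f trm \<Rightarrow> 'a" where
  "z0 I zero = eval I (\<lambda>_. undefined) zero"

lemma tp_cong: "(\<And>v. v < n \<Longrightarrow> f v = g v) \<Longrightarrow> b = b' \<Longrightarrow> tp I \<theta> n f b = tp I \<theta> n g b'"
  unfolding tp_def by (rule eval_cong) auto

lemma eval_alpha': "vars \<alpha> \<subseteq> {0,1} \<Longrightarrow>
   eval I \<rho> (alpha_app \<alpha> s t) = aop I \<alpha> (eval I \<rho> s) (eval I \<rho> t)"
  unfolding aop_def by (simp add: eval_alpha)

lemma eval_theta': "vars \<theta> \<subseteq> {0..n} \<Longrightarrow> length L = Suc n \<Longrightarrow>
   eval I \<rho> (theta_app \<theta> L) = tp I \<theta> n (\<lambda>v. eval I \<rho> (L ! v)) (eval I \<rho> (L ! n))"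
  unfolding tp_def
  by (subst eval_theta) (auto intro!: eval_cong simp: atLeastLessThanSuc_atLeastAtMost)

lemma eval_zero: "vars zero = {} \<Longrightarrow> eval I \<rho> zero = z0 I zero"
  unfolding z0_def by (rule eval_cong) auto



definition ta :: "('f \<Rightarrow> nat) \<Rightarrow> 'f trm list \<Rightarrow> 'f trm \<Rightarrow> nat \<Rightarrow> 'f \<Rightarrow> nat \<Rightarrow> 'f trm" where
  "ta ar \<alpha>s \<theta> n f i = alpha_app (\<alpha>s ! i)
         (App f (map (\<lambda>j. theta_app \<theta> (map (\<lambda>l. Var (ar f + j * n + l)) [0..<n] @ [Var j]))
                     [0..<ar f]))
         (App f (map Var [0..<ar f]))"

definition tb :: "('f \<Rightarrow> nat) \<Rightarrow> 'f trm list \<Rightarrow> 'f trm \<Rightarrow> nat \<Rightarrow> 'f \<Rightarrow> nat \<Rightarrow> nat \<Rightarrow> 'f trm" where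
  "tb ar \<alpha>s \<theta> n f i j = alpha_app (\<alpha>s ! i)
         (App f ((map Var [0..<ar f])[j := theta_app \<theta> (map (\<lambda>l. Var (ar f + l)) [0..<n] @ [Var j])]))
         (App f (map Var [0..<ar f]))"

lemma terms_a_eq: "terms_a ar F F' \<alpha>s \<theta> n =
  {(ta ar \<alpha>s \<theta> n \<tau> i, {ar \<tau>..<ar \<tau> + ar \<tau> * n}) | \<tau> i. \<tau> \<in> F' - F \<and> i < n}"
  unfolding terms_a_def ta_def by simp

lemma terms_b_eq: "terms_b ar F F' \<alpha>s \<theta> n =
  {(tb ar \<alpha>s \<theta> n \<tau> i j, {ar \<tau>..<ar \<tau> + n}) | \<tau> i j. \<tau> \<in> F' - F \<and> i < n \<and> j < ar \<tau>}"
  unfolding terms_b_def tb_def by simp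

lemma arith1: "j < k \<Longrightarrow> l < (n::nat) \<Longrightarrow> j * n + l < k * n"
proof -
  assume "j < k" "l < n"
  then have "j * n + l < Suc j * n" by simp
  also have "\<dots> \<le> k * n" using \<open>j < k\<close> by (intro mult_le_mono1) simp
  finally show ?thesis .
qed

lemma arith2: "l < (n::nat) \<Longrightarrow> (j * n + l) div n = j \<and> (j * n + l) mod n = l"
  by simp

lemma IT_a:
  assumes B: "bit_speciale ar G E zero \<alpha>s \<theta> n" and f: "f \<in> G" and i: "i < n"
  shows "ideal_term ar G E zero (ta ar \<alpha>s \<theta> n f i) {ar f..<ar f + ar f * n}"
proof -
  define k where "k = ar f"
  have fa: "n \<ge> 1" "length \<alpha>s = n" "wf_trm ar G zero" "vars zero = {}"
    "\<And>\<alpha>. \<alpha> \<in> set \<alpha>s \<Longrightarrow> wf_trm ar G \<alpha>" "\<And>\<alpha>. \<alpha> \<in> set \<alpha>s \<Longrightarrow> vars \<alpha> \<subseteq> {0,1}"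
    "wf_trm ar G \<theta>" "vars \<theta> \<subseteq> {0..n}"
    using B unfolding bit_speciale_def by auto
  have al: "\<alpha>s ! i \<in> set \<alpha>s" using i fa by auto
  define Lj :: "nat \<Rightarrow> 'a trm list" where "Lj = (\<lambda>j. map (\<lambda>l. Var (k + j * n + l)) [0..<n] @ [Var j])"
  define \<sigma> :: "nat \<Rightarrow> 'a trm" where "\<sigma> = (\<lambda>v. if v \<in> {k..<k + k * n} then zero else Var v)"
  have vL: "\<And>j. vars \<theta> \<subseteq> {0..<length (Lj j)}" unfolding Lj_def using fa by auto
  have sL: "\<And>j. j < k \<Longrightarrow> map (subst \<sigma>) (Lj j) = replicate n zero @ [Var j]"
    unfolding Lj_def \<sigma>_def by (auto intro!: nth_equalityI simp: nth_append arith1)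
  have eL: "\<And>j. j < k \<Longrightarrow> eqc ar G E (subst \<sigma> (theta_app \<theta> (Lj j))) (Var j)"
    using D2[OF B] sL theta_subst[OF vL] by simp
  have sV: "map (subst \<sigma>) (map Var [0..<k]) = map Var [0..<k]"
    unfolding \<sigma>_def by auto
  have "list_all2 (eqc ar G E) (map (subst \<sigma>) (map (\<lambda>j. theta_app \<theta> (Lj j)) [0..<k])) (map Var [0..<k])"
    using eL by (auto simp: list_all2_conv_all_nth)
  then have e1: "eqc ar G E (subst \<sigma> (App f (map (\<lambda>j. theta_app \<theta> (Lj j)) [0..<k]))) (App f (map Var [0..<k]))"
    using f k_def by (auto intro!: eqc.cong)
  have wx: "wf_trm ar G (App f (map Var [0..<k]))" using f k_def by auto
  have "eqc ar G E (subst \<sigma> (ta ar \<alpha>s \<theta> n f i)) (alpha_app (\<alpha>s ! i) (App f (map Var [0..<k])) (App f (map Var [0..<k])))"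
  proof -
    have sA: "subst \<sigma> (App f (map Var [0..<k])) = App f (map Var [0..<k])"
      unfolding \<sigma>_def by simp
    have "subst \<sigma> (ta ar \<alpha>s \<theta> n f i) = alpha_app (\<alpha>s ! i) (subst \<sigma> (App f (map (\<lambda>j. theta_app \<theta> (Lj j)) [0..<k]))) (App f (map Var [0..<k]))"
      unfolding ta_def k_def[symmetric] by (simp only: alpha_subst[OF fa(6)[OF al]] sA Lj_def)
    then show ?thesis using alpha_cong[OF fa(5)[OF al] e1 eqc.refl[OF wx]] by simp
  qed
  then have "eqc ar G E (subst \<sigma> (ta ar \<alpha>s \<theta> n f i)) zero"
    using D1[OF B al wx] by (metis eqc.trans)
  moreover have "wf_trm ar G (ta ar \<alpha>s \<theta> n f i)"
    unfolding ta_def using fa al f by (auto intro!: wf_alpha wf_theta)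
  ultimately show ?thesis unfolding ideal_term_def \<sigma>_def k_def by simp
qed

lemma IT_b:
  assumes B: "bit_speciale ar G E zero \<alpha>s \<theta> n" and f: "f \<in> G" and i: "i < n" and j: "j < ar f"
  shows "ideal_term ar G E zero (tb ar \<alpha>s \<theta> n f i j) {ar f..<ar f + n}"
proof -
  define k where "k = ar f"
  have fa: "n \<ge> 1" "length \<alpha>s = n" "wf_trm ar G zero" "vars zero = {}"
    "\<And>\<alpha>. \<alpha> \<in> set \<alpha>s \<Longrightarrow> wf_trm ar G \<alpha>" "\<And>\<alpha>. \<alpha> \<in> set \<alpha>s \<Longrightarrow> vars \<alpha> \<subseteq> {0,1}"
    "wf_trm ar G \<theta>" "vars \<theta> \<subseteq> {0..n}"
    using B unfolding bit_speciale_def by auto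
  have al: "\<alpha>s ! i \<in> set \<alpha>s" using i fa by auto
  define L :: "'a trm list" where "L = map (\<lambda>l. Var (k + l)) [0..<n] @ [Var j]"
  define \<sigma> :: "nat \<Rightarrow> 'a trm" where "\<sigma> = (\<lambda>v. if v \<in> {k..<k + n} then zero else Var v)"
  have vL: "vars \<theta> \<subseteq> {0..<length L}" unfolding L_def using fa by auto
  have sL: "map (subst \<sigma>) L = replicate n zero @ [Var j]"
    unfolding L_def \<sigma>_def using j k_def by (auto intro!: nth_equalityI simp: nth_append)
  have eL: "eqc ar G E (subst \<sigma> (theta_app \<theta> L)) (Var j)"
    using D2[OF B] sL theta_subst[OF vL] by simp
  have sV: "map (subst \<sigma>) (map Var [0..<k]) = map Var [0..<k]"
    unfolding \<sigma>_def by auto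
  have "list_all2 (eqc ar G E) (map (subst \<sigma>) ((map Var [0..<k])[j := theta_app \<theta> L])) (map Var [0..<k])"
    using eL j k_def sV by (auto simp: list_all2_conv_all_nth map_update nth_list_update intro: eqc.refl)
  then have e1: "eqc ar G E (subst \<sigma> (App f ((map Var [0..<k])[j := theta_app \<theta> L]))) (App f (map Var [0..<k]))"
    using f k_def by (auto intro!: eqc.cong)
  have wx: "wf_trm ar G (App f (map Var [0..<k]))" using f k_def by auto
  have "eqc ar G E (subst \<sigma> (tb ar \<alpha>s \<theta> n f i j)) (alpha_app (\<alpha>s ! i) (App f (map Var [0..<k])) (App f (map Var [0..<k])))"
  proof -
    have sA: "subst \<sigma> (App f (map Var [0..<k])) = App f (map Var [0..<k])"
      unfolding \<sigma>_def by simp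
    have "subst \<sigma> (tb ar \<alpha>s \<theta> n f i j) = alpha_app (\<alpha>s ! i) (subst \<sigma> (App f ((map Var [0..<k])[j := theta_app \<theta> L]))) (App f (map Var [0..<k]))"
      unfolding tb_def k_def[symmetric] L_def[symmetric] by (simp only: alpha_subst[OF fa(6)[OF al]] sA)
    then show ?thesis using alpha_cong[OF fa(5)[OF al] e1 eqc.refl[OF wx]] by simp
  qed
  then have "eqc ar G E (subst \<sigma> (tb ar \<alpha>s \<theta> n f i j)) zero"
    using D1[OF B al wx] by (metis eqc.trans)
  moreover have "wf_trm ar G (tb ar \<alpha>s \<theta> n f i j)"
  proof -
    have wth: "wf_trm ar G (theta_app \<theta> L)" unfolding L_def using fa(7) by (rule wf_theta) auto
    have "\<forall>t\<in>set ((map Var [0..<k])[j := theta_app \<theta> L]). wf_trm ar G t"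
    proof
      fix t assume "t \<in> set ((map Var [0..<k])[j := theta_app \<theta> L])"
      then have "t \<in> insert (theta_app \<theta> L) (set (map Var [0..<k]))"
        using set_update_subset_insert by (metis subsetD)
      then show "wf_trm ar G t" using wth by auto
    qed
    then have "wf_trm ar G (App f ((map Var [0..<k])[j := theta_app \<theta> L]))" using f k_def by simp
    then show ?thesis unfolding tb_def k_def[symmetric] L_def[symmetric]
      by (rule wf_alpha[OF fa(5)[OF al] _ wx])
  qed
  ultimately show ?thesis unfolding ideal_term_def \<sigma>_def k_def by simp
qed

context
  fixes ar :: "'f \<Rightarrow> nat" and F G :: "'f set" and \<Sigma> E :: "('f trm \<times> 'f trm) set"
    and zero \<theta> :: "'f trm" and \<alpha>s :: "'f trm list" and n :: nat
    and A :: "'a set" and I :: "'f \<Rightarrow> 'a list \<Rightarrow> 'a"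
  assumes B: "bit_speciale ar F \<Sigma> zero \<alpha>s \<theta> n" and FG: "F \<subseteq> G" and SE: "\<Sigma> \<subseteq> E"
    and alg: "is_alg ar G A I" and sat: "satisfies A I E"
begin

lemma B': "bit_speciale ar G E zero \<alpha>s \<theta> n" using bit_mono[OF B FG SE] .

lemma facts:
  "n \<ge> 1" "length \<alpha>s = n" "wf_trm ar F zero" "vars zero = {}"
  "\<And>\<alpha>. \<alpha> \<in> set \<alpha>s \<Longrightarrow> wf_trm ar F \<alpha>" "\<And>\<alpha>. \<alpha> \<in> set \<alpha>s \<Longrightarrow> vars \<alpha> \<subseteq> {0,1}"
  "wf_trm ar F \<theta>" "vars \<theta> \<subseteq> {0..n}"
  using B unfolding bit_speciale_def by auto

lemma wfG: "wf_trm ar F t \<Longrightarrow> wf_trm ar G t" using wf_mono[OF FG] .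

lemma Ane: "A \<noteq> {}" using alg by (simp add: is_alg_def)

lemma z0_in: "z0 I zero \<in> A"
proof -
  obtain a where "a \<in> A" using Ane by auto
  then have "eval I (\<lambda>_. a) zero \<in> A" using facts wfG by (intro eval_in[OF alg]) auto
  then show ?thesis using eval_zero facts by metis
qed

lemma aop_in: "\<alpha> \<in> set \<alpha>s \<Longrightarrow> a \<in> A \<Longrightarrow> b \<in> A \<Longrightarrow> aop I \<alpha> a b \<in> A"
  unfolding aop_def using facts wfG by (intro eval_in[OF alg]) auto

lemma sound: "eqc ar G E s t \<Longrightarrow> (\<And>v. \<rho> v \<in> A) \<Longrightarrow> eval I \<rho> s = eval I \<rho> t"
  using eqc_sound alg sat by blast

lemma S1: "\<alpha> \<in> set \<alpha>s \<Longrightarrow> a \<in> A \<Longrightarrow> aop I \<alpha> a a = z0 I zero"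
proof -
  assume a: "\<alpha> \<in> set \<alpha>s" "a \<in> A"
  have "eval I (\<lambda>_. a) (alpha_app \<alpha> (Var 0) (Var 0)) = eval I (\<lambda>_. a) zero"
    using D1[OF B' a(1)] a by (intro sound) auto
  then show ?thesis using a facts by (simp add: eval_alpha' eval_zero)
qed

lemma S2: "a \<in> A \<Longrightarrow> b \<in> A \<Longrightarrow> tp I \<theta> n (\<lambda>l. aop I (\<alpha>s ! l) a b) b = a"
proof -
  assume ab: "a \<in> A" "b \<in> A"
  let ?\<rho> = "\<lambda>v. if v = 0 then a else b"
  let ?L = "map (\<lambda>\<alpha>. alpha_app \<alpha> (Var 0) (Var 1)) \<alpha>s @ [Var 1]"
  have "eval I ?\<rho> (theta_app \<theta> ?L) = eval I ?\<rho> (Var 0)"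
    using B' ab by (intro sound) (auto simp: bit_speciale_def)
  moreover have "eval I ?\<rho> (theta_app \<theta> ?L) = tp I \<theta> n (\<lambda>l. aop I (\<alpha>s ! l) a b) b"
  proof -
    have "eval I ?\<rho> (theta_app \<theta> ?L) = tp I \<theta> n (\<lambda>v. eval I ?\<rho> (?L ! v)) (eval I ?\<rho> (?L ! n))"
      using facts by (intro eval_theta') auto
    also have "\<dots> = tp I \<theta> n (\<lambda>l. aop I (\<alpha>s ! l) a b) b"
      using facts by (intro tp_cong) (auto simp: nth_append eval_alpha' aop_def)
    finally show ?thesis .
  qed
  ultimately show ?thesis by simp
qed


context
  fixes H :: "'a set"
  assumes Hsub: "H \<subseteq> A"
    and Hid: "\<And>t Y. ideal_term ar F \<Sigma> zero t Y \<Longrightarrow> closed_under I A H t Y"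
begin

lemma idF: "ideal_term ar F \<Sigma> zero t Y \<Longrightarrow> (\<And>v. \<rho> v \<in> A) \<Longrightarrow> (\<And>v. v \<in> Y \<Longrightarrow> \<rho> v \<in> H)
   \<Longrightarrow> eval I \<rho> t \<in> H"
  using Hid unfolding closed_under_def by blast

lemma H1: "z0 I zero \<in> H"
proof -
  have "ideal_term ar F \<Sigma> zero zero {}"
    unfolding ideal_term_def using facts by (auto simp: subst_closed intro: eqc.refl)
  then have "eval I (\<lambda>_. z0 I zero) zero \<in> H" using z0_in by (rule idF) auto
  then show ?thesis using facts eval_zero by metis
qed

lemma H2: "a \<in> A \<Longrightarrow> Rel I \<alpha>s H a a"
  unfolding Rel_def using S1 H1 by auto

lemma H3: "h \<in> H \<Longrightarrow> Rel I \<alpha>s H h (z0 I zero)"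
  unfolding Rel_def
proof
  fix \<alpha> assume h: "h \<in> H" and a: "\<alpha> \<in> set \<alpha>s"
  let ?\<sigma> = "\<lambda>v. if v \<in> {0} then zero else Var v"
  have "subst ?\<sigma> (alpha_app \<alpha> (Var 0) zero) = alpha_app \<alpha> zero zero"
    using a facts by (simp add: alpha_subst subst_closed)
  moreover have "eqc ar F \<Sigma> (alpha_app \<alpha> zero zero) zero" using D1[OF B a] facts by auto
  ultimately have "ideal_term ar F \<Sigma> zero (alpha_app \<alpha> (Var 0) zero) {0}"
    unfolding ideal_term_def using a facts by (auto intro!: wf_alpha)
  then have "eval I (\<lambda>_. h) (alpha_app \<alpha> (Var 0) zero) \<in> H"
    using h Hsub by (intro idF) auto
  then show "aop I \<alpha> h (z0 I zero) \<in> H" using a facts by (simp add: eval_alpha' eval_zero)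
qed

lemma H4: "a \<in> A \<Longrightarrow> Rel I \<alpha>s H a (z0 I zero) \<Longrightarrow> a \<in> H"
proof -
  assume a: "a \<in> A" and R: "Rel I \<alpha>s H a (z0 I zero)"
  let ?L = "map Var [0..<n] @ [zero]"
  let ?\<sigma> = "\<lambda>v. if v \<in> {0..<n} then zero else Var v"
  let ?\<rho> = "\<lambda>v. if v < n then aop I (\<alpha>s ! v) a (z0 I zero) else a"
  have vt: "vars \<theta> \<subseteq> {0..<length ?L}" using facts by auto
  have "map (subst ?\<sigma>) ?L = replicate n zero @ [zero]"
    using facts by (auto intro!: nth_equalityI simp: subst_closed nth_append)
  then have "subst ?\<sigma> (theta_app \<theta> ?L) = theta_app \<theta> (replicate n zero @ [zero])"
    using theta_subst[OF vt] by simp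
  moreover have "eqc ar F \<Sigma> (theta_app \<theta> (replicate n zero @ [zero])) zero"
    using D2[OF B] facts by auto
  ultimately have "ideal_term ar F \<Sigma> zero (theta_app \<theta> ?L) {0..<n}"
    unfolding ideal_term_def using facts by (auto intro!: wf_theta)
  moreover have "\<And>v. ?\<rho> v \<in> A" using a z0_in aop_in facts by auto
  moreover have "\<And>v. v \<in> {0..<n} \<Longrightarrow> ?\<rho> v \<in> H" using R facts unfolding Rel_def by auto
  ultimately have "eval I ?\<rho> (theta_app \<theta> ?L) \<in> H" by (rule idF)
  moreover have "eval I ?\<rho> (theta_app \<theta> ?L) = tp I \<theta> n (\<lambda>v. eval I ?\<rho> (?L ! v)) (eval I ?\<rho> (?L ! n))"
    using facts by (intro eval_theta') auto
  moreover have "\<dots> = tp I \<theta> n (\<lambda>l. aop I (\<alpha>s ! l) a (z0 I zero)) (z0 I zero)"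
    using facts by (intro tp_cong) (auto simp: nth_append eval_zero)
  moreover have "\<dots> = a" using S2 a z0_in by blast
  ultimately show ?thesis by simp
qed


lemma H5: "a \<in> A \<Longrightarrow> b \<in> A \<Longrightarrow> c \<in> A \<Longrightarrow> Rel I \<alpha>s H a b \<Longrightarrow> Rel I \<alpha>s H b c \<Longrightarrow> Rel I \<alpha>s H a c"
  unfolding Rel_def
proof
  fix \<alpha> assume abc: "a \<in> A" "b \<in> A" "c \<in> A" and R1: "\<forall>\<alpha>\<in>set \<alpha>s. aop I \<alpha> a b \<in> H"
    and R2: "\<forall>\<alpha>\<in>set \<alpha>s. aop I \<alpha> b c \<in> H" and al: "\<alpha> \<in> set \<alpha>s"
  define L1 :: "'f trm list" where "L1 = map (\<lambda>l. Var (n + l)) [0..<n] @ [Var (2*n)]"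
  define L2 :: "'f trm list" where "L2 = map Var [0..<n] @ [theta_app \<theta> L1]"
  define t where "t = alpha_app \<alpha> (theta_app \<theta> L2) (Var (2*n))"
  define \<sigma> :: "nat \<Rightarrow> 'f trm" where "\<sigma> = (\<lambda>v. if v \<in> {0..<2*n} then zero else Var v)"
  define \<rho> where "\<rho> = (\<lambda>v. if v < n then aop I (\<alpha>s ! v) a b else if v < 2*n then aop I (\<alpha>s ! (v - n)) b c else c)"
  have v1: "vars \<theta> \<subseteq> {0..<length L1}" and v2: "vars \<theta> \<subseteq> {0..<length L2}"
    unfolding L1_def L2_def using facts by auto
  have va: "vars \<alpha> \<subseteq> {0,1}" "wf_trm ar F \<alpha>" using al facts by auto
  have s1: "map (subst \<sigma>) L1 = replicate n zero @ [Var (2*n)]"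
    unfolding L1_def \<sigma>_def by (auto intro!: nth_equalityI simp: nth_append)
  have e1: "eqc ar F \<Sigma> (subst \<sigma> (theta_app \<theta> L1)) (Var (2*n))"
    using D2[OF B, of "Var (2*n)"] theta_subst[OF v1] s1 by simp
  have s2: "map (subst \<sigma>) L2 = replicate n zero @ [subst \<sigma> (theta_app \<theta> L1)]"
    unfolding L2_def \<sigma>_def by (auto intro!: nth_equalityI simp: nth_append)
  have wL1: "wf_trm ar F (subst \<sigma> (theta_app \<theta> L1))"
    unfolding L1_def \<sigma>_def using facts by (auto intro!: wf_subst wf_theta)
  have "list_all2 (eqc ar F \<Sigma>) (replicate n zero @ [subst \<sigma> (theta_app \<theta> L1)]) (replicate n zero @ [Var (2*n)])"
    using e1 facts by (intro list_all2_appendI) (auto simp: list_all2_conv_all_nth intro: eqc.refl)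
  then have "eqc ar F \<Sigma> (theta_app \<theta> (replicate n zero @ [subst \<sigma> (theta_app \<theta> L1)]))
     (theta_app \<theta> (replicate n zero @ [Var (2*n)]))"
    using facts by (intro theta_cong) auto
  then have e2: "eqc ar F \<Sigma> (subst \<sigma> (theta_app \<theta> L2)) (Var (2*n))"
    using D2[OF B, of "Var (2*n)"] theta_subst[OF v2] s2 by (metis eqc.trans wf_trm.simps(1))
  have "eqc ar F \<Sigma> (subst \<sigma> t) (alpha_app \<alpha> (Var (2*n)) (Var (2*n)))"
    unfolding t_def using alpha_subst[OF va(1)] alpha_cong[OF va(2) e2] eqc.refl \<sigma>_def
    by (simp add: eqc.refl)
  then have "eqc ar F \<Sigma> (subst \<sigma> t) zero" using D1[OF B al] by (metis eqc.trans wf_trm.simps(1))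
  moreover have "wf_trm ar F t" unfolding t_def L2_def L1_def using facts va
    by (auto intro!: wf_alpha wf_theta)
  ultimately have it: "ideal_term ar F \<Sigma> zero t {0..<2*n}"
    unfolding ideal_term_def \<sigma>_def by simp
  have rA: "\<And>v. \<rho> v \<in> A" unfolding \<rho>_def using abc aop_in facts by auto
  have rH: "\<And>v. v \<in> {0..<2*n} \<Longrightarrow> \<rho> v \<in> H" unfolding \<rho>_def using R1 R2 facts by auto
  have "eval I \<rho> (theta_app \<theta> L1) = tp I \<theta> n (\<lambda>v. eval I \<rho> (L1 ! v)) (eval I \<rho> (L1 ! n))"
    unfolding L1_def using facts by (intro eval_theta') auto
  also have "\<dots> = tp I \<theta> n (\<lambda>l. aop I (\<alpha>s ! l) b c) c"
    unfolding L1_def \<rho>_def by (intro tp_cong) (auto simp: nth_append)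
  also have "\<dots> = b" using S2 abc by blast
  finally have ev1: "eval I \<rho> (theta_app \<theta> L1) = b" .
  have "eval I \<rho> (theta_app \<theta> L2) = tp I \<theta> n (\<lambda>v. eval I \<rho> (L2 ! v)) (eval I \<rho> (L2 ! n))"
    unfolding L2_def using facts by (intro eval_theta') auto
  also have "\<dots> = tp I \<theta> n (\<lambda>l. aop I (\<alpha>s ! l) a b) b"
    unfolding L2_def using ev1 by (intro tp_cong) (auto simp: nth_append \<rho>_def)
  also have "\<dots> = a" using S2 abc by blast
  finally have ev2: "eval I \<rho> (theta_app \<theta> L2) = a" .
  have "eval I \<rho> t = aop I \<alpha> a c" unfolding t_def using va ev2 by (simp add: eval_alpha' \<rho>_def)
  moreover have "eval I \<rho> t \<in> H" using it rA rH by (rule idF)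
  ultimately show "aop I \<alpha> a c \<in> H" by simp
qed


lemma nth_in: "set xs \<subseteq> A \<Longrightarrow> i < length xs \<Longrightarrow> xs ! i \<in> A"
  using nth_mem by blast

lemma C_a:
  assumes f: "f \<in> G"
    and cl: "\<And>i. i < n \<Longrightarrow> closed_under I A H (ta ar \<alpha>s \<theta> n f i) {ar f..<ar f + ar f * n}"
    and xs: "length xs = ar f" "set xs \<subseteq> A" and ys: "length ys = ar f" "set ys \<subseteq> A"
    and R: "list_all2 (Rel I \<alpha>s H) xs ys"
  shows "Rel I \<alpha>s H (I f xs) (I f ys)"
  unfolding Rel_def
proof
  fix \<alpha> assume "\<alpha> \<in> set \<alpha>s"
  then obtain i where i: "i < n" "\<alpha> = \<alpha>s ! i" using facts by (auto simp: in_set_conv_nth)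
  have al: "\<alpha> \<in> set \<alpha>s" using i facts by auto
  define k where "k = ar f"
  define \<rho> where "\<rho> = (\<lambda>v. if v < k then ys ! v else if v < k + k*n
     then aop I (\<alpha>s ! ((v-k) mod n)) (xs ! ((v-k) div n)) (ys ! ((v-k) div n)) else z0 I zero)"
  have dk: "(v-k) div n < k \<and> (v-k) mod n < n" if "k \<le> v" "v < k + k*n" for v
  proof -
    have "v - k < k * n" using that by simp
    then show ?thesis using facts(1) by (auto simp: less_mult_imp_div_less)
  qed
  have rA: "\<rho> v \<in> A" for v
  proof (cases "v < k")
    case True then show ?thesis using ys k_def by (auto simp: \<rho>_def intro: nth_in)
  next
    case False
    show ?thesis
    proof (cases "v < k + k*n")
      case True
      then have d: "(v-k) div n < k" "(v-k) mod n < n" using dk False by auto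
      then show ?thesis using False True xs ys k_def facts(2) d
        by (auto simp: \<rho>_def intro!: aop_in nth_in)
    next
      case False2: False
      then show ?thesis using z0_in False by (simp add: \<rho>_def)
    qed
  qed
  have rH: "\<rho> v \<in> H" if "v \<in> {k..<k + k * n}" for v
  proof -
    have d: "(v-k) div n < k" "(v-k) mod n < n" using dk that by auto
    then have "Rel I \<alpha>s H (xs ! ((v-k) div n)) (ys ! ((v-k) div n))"
      using R xs k_def by (auto intro: list_all2_nthD)
    then show ?thesis using that d facts(2) by (auto simp: \<rho>_def Rel_def)
  qed
  have th: "eval I \<rho> (theta_app \<theta> (map (\<lambda>l. Var (k + j * n + l)) [0..<n] @ [Var j])) = xs ! j"
    if j: "j < k" for j
  proof -
    have "eval I \<rho> (theta_app \<theta> (map (\<lambda>l. Var (k + j * n + l)) [0..<n] @ [Var j]))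
       = tp I \<theta> n (\<lambda>l. eval I \<rho> ((map (\<lambda>l. Var (k + j * n + l)) [0..<n] @ [Var j]) ! l))
                   (eval I \<rho> ((map (\<lambda>l. Var (k + j * n + l)) [0..<n] @ [Var j]) ! n))"
      using facts by (intro eval_theta') auto
    also have "\<dots> = tp I \<theta> n (\<lambda>l. aop I (\<alpha>s ! l) (xs ! j) (ys ! j)) (ys ! j)"
    proof (rule tp_cong)
      fix l assume l: "l < n"
      have "j * n + l < k * n" using arith1 j l by blast
      then show "eval I \<rho> ((map (\<lambda>l. Var (k + j * n + l)) [0..<n] @ [Var j]) ! l) = aop I (\<alpha>s ! l) (xs ! j) (ys ! j)"
        using l arith2[OF l, of j] by (simp add: nth_append \<rho>_def)
    qed (simp add: nth_append \<rho>_def j)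
    also have "\<dots> = xs ! j"
    proof -
      have "xs ! j \<in> A" "ys ! j \<in> A" using xs ys j k_def by (auto intro: nth_in)
      then show ?thesis by (rule S2)
    qed
    finally show ?thesis .
  qed
  have m1: "map (\<lambda>j. eval I \<rho> (theta_app \<theta> (map (\<lambda>l. Var (k + j * n + l)) [0..<n] @ [Var j]))) [0..<k] = xs"
    using th xs k_def by (intro nth_equalityI) auto
  have m2: "map \<rho> [0..<k] = ys" using ys k_def by (intro nth_equalityI) (auto simp: \<rho>_def)
  have "eval I \<rho> (ta ar \<alpha>s \<theta> n f i) = aop I \<alpha> (I f xs) (I f ys)"
    unfolding ta_def k_def[symmetric] using facts(6)[OF al] i
    by (simp add: eval_alpha' m1[unfolded comp_def] m2 map_map comp_def del: map_eq_conv)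
  moreover have "eval I \<rho> (ta ar \<alpha>s \<theta> n f i) \<in> H"
    using cl[OF i(1)] rA rH unfolding closed_under_def k_def by blast
  ultimately show "aop I \<alpha> (I f xs) (I f ys) \<in> H" by simp
qed

lemma C_b1:
  assumes f: "f \<in> G"
    and cl: "\<And>i j. i < n \<Longrightarrow> j < ar f \<Longrightarrow> closed_under I A H (tb ar \<alpha>s \<theta> n f i j) {ar f..<ar f + n}"
    and zs: "length zs = ar f" "set zs \<subseteq> A" and x: "x \<in> A" and j: "j < ar f"
    and R: "Rel I \<alpha>s H x (zs ! j)"
  shows "Rel I \<alpha>s H (I f (zs[j := x])) (I f zs)"
  unfolding Rel_def
proof
  fix \<alpha> assume "\<alpha> \<in> set \<alpha>s"
  then obtain i where i: "i < n" "\<alpha> = \<alpha>s ! i" using facts by (auto simp: in_set_conv_nth)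
  have al: "\<alpha> \<in> set \<alpha>s" using i facts by auto
  define k where "k = ar f"
  define \<rho> where "\<rho> = (\<lambda>v. if v < k then zs ! v else if v < k + n
     then aop I (\<alpha>s ! (v-k)) x (zs ! j) else z0 I zero)"
  have zj: "zs ! j \<in> A" using zs j by (auto intro: nth_in)
  have rA: "\<rho> v \<in> A" for v
    unfolding \<rho>_def using zs k_def facts(2) zj x z0_in by (auto intro!: aop_in nth_in)
  have rH: "\<rho> v \<in> H" if "v \<in> {k..<k + n}" for v
    using that R facts(2) by (auto simp: \<rho>_def Rel_def)
  define L :: "'f trm list" where "L = map (\<lambda>l. Var (k + l)) [0..<n] @ [Var j]"
  have th: "eval I \<rho> (theta_app \<theta> L) = x"
  proof -
    have "eval I \<rho> (theta_app \<theta> L) = tp I \<theta> n (\<lambda>l. eval I \<rho> (L ! l)) (eval I \<rho> (L ! n))"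
      unfolding L_def using facts by (intro eval_theta') auto
    also have "\<dots> = tp I \<theta> n (\<lambda>l. aop I (\<alpha>s ! l) x (zs ! j)) (zs ! j)"
      by (rule tp_cong) (auto simp: nth_append \<rho>_def L_def j k_def)
    also have "\<dots> = x" using x zj by (rule S2)
    finally show ?thesis .
  qed
  have m2: "map \<rho> [0..<k] = zs" using zs k_def by (intro nth_equalityI) (auto simp: \<rho>_def)
  have m1: "map (eval I \<rho>) ((map Var [0..<k])[j := theta_app \<theta> L]) = zs[j := x]"
    using m2 th by (simp add: map_update map_map comp_def del: map_eq_conv)
  have "eval I \<rho> (tb ar \<alpha>s \<theta> n f i j) = aop I \<alpha> (I f (zs[j := x])) (I f zs)"
    unfolding tb_def k_def[symmetric] L_def[symmetric] using facts(6)[OF al] i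
    by (simp add: eval_alpha' m1 m2 map_map comp_def del: map_eq_conv)
  moreover have "eval I \<rho> (tb ar \<alpha>s \<theta> n f i j) \<in> H"
    using cl[OF i(1) j] rA rH unfolding closed_under_def k_def by blast
  ultimately show "aop I \<alpha> (I f (zs[j := x])) (I f zs) \<in> H" by simp
qed

lemma C_b:
  assumes f: "f \<in> G"
    and cl: "\<And>i j. i < n \<Longrightarrow> j < ar f \<Longrightarrow> closed_under I A H (tb ar \<alpha>s \<theta> n f i j) {ar f..<ar f + n}"
    and xs: "length xs = ar f" "set xs \<subseteq> A" and ys: "length ys = ar f" "set ys \<subseteq> A"
    and R: "list_all2 (Rel I \<alpha>s H) xs ys"
  shows "Rel I \<alpha>s H (I f xs) (I f ys)"
proof -
  define k where "k = ar f"
  define z where "z = (\<lambda>m. map (\<lambda>i. if i < m then xs ! i else ys ! i) [0..<k])"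
  have zA: "set (z m) \<subseteq> A" for m
    unfolding z_def using xs ys k_def by (auto intro: nth_in)
  have zl: "length (z m) = ar f" for m unfolding z_def k_def by simp
  have IA: "I f (z m) \<in> A" for m
    using alg f zA[of m] zl[of m] unfolding is_alg_def by blast
  have "m \<le> k \<Longrightarrow> Rel I \<alpha>s H (I f (z m)) (I f ys)" for m
  proof (induction m)
    case 0
    have "z 0 = ys" unfolding z_def using ys k_def by (intro nth_equalityI) auto
    then show ?case using H2 IA[of 0] by simp
  next
    case (Suc m)
    then have m: "m < k" by simp
    have zs: "z (Suc m) = (z m)[m := xs ! m]"
      unfolding z_def using m by (intro nth_equalityI) (auto simp: nth_list_update)
    have zm: "z m ! m = ys ! m" unfolding z_def using m by simp
    have "Rel I \<alpha>s H (xs ! m) (ys ! m)" using R m xs k_def by (auto intro: list_all2_nthD)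
    moreover have "xs ! m \<in> A" using xs m k_def by (auto intro: nth_in)
    ultimately have "Rel I \<alpha>s H (I f ((z m)[m := xs ! m])) (I f (z m))"
      using C_b1[OF f cl zl zA, of "xs ! m" m] m k_def zm by auto
    then have "Rel I \<alpha>s H (I f (z (Suc m))) (I f (z m))" using zs by simp
    moreover have "Rel I \<alpha>s H (I f (z m)) (I f ys)" using Suc m by simp
    moreover have "I f ys \<in> A" using alg f ys unfolding is_alg_def by blast
    ultimately show ?case using H5 IA by blast
  qed
  moreover have "z k = xs" unfolding z_def using xs k_def by (intro nth_equalityI) auto
  ultimately show ?thesis by auto
qed

lemma main:
  assumes compat: "\<And>f xs ys. f \<in> G \<Longrightarrow> length xs = ar f \<Longrightarrow> length ys = ar f \<Longrightarrow> set xs \<subseteq> A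
      \<Longrightarrow> set ys \<subseteq> A \<Longrightarrow> list_all2 (Rel I \<alpha>s H) xs ys \<Longrightarrow> Rel I \<alpha>s H (I f xs) (I f ys)"
    and it: "ideal_term ar G E zero t Y"
  shows "closed_under I A H t Y"
  unfolding closed_under_def
proof (intro allI impI)
  fix \<rho> assume rA: "\<forall>v. \<rho> v \<in> A" and rH: "\<forall>v\<in>Y. \<rho> v \<in> H"
  define \<rho>' where "\<rho>' = (\<lambda>v. if v \<in> Y then z0 I zero else \<rho> v)"
  have r'A: "\<And>v. \<rho>' v \<in> A" unfolding \<rho>'_def using rA z0_in by auto
  have wt: "wf_trm ar G t" and et: "eqc ar G E (subst (\<lambda>v. if v \<in> Y then zero else Var v) t) zero"
    using it unfolding ideal_term_def by auto
  have "Rel I \<alpha>s H (eval I \<rho> s) (eval I \<rho>' s)" if "wf_trm ar G s" for s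
    using that
  proof (induction s)
    case (Var v)
    then show ?case using H2 H3 rA rH by (auto simp: \<rho>'_def)
  next
    case (App f ts)
    have l: "list_all2 (Rel I \<alpha>s H) (map (eval I \<rho>) ts) (map (eval I \<rho>') ts)"
      using App by (auto simp: list_all2_conv_all_nth)
    have "set (map (eval I \<rho>) ts) \<subseteq> A" "set (map (eval I \<rho>') ts) \<subseteq> A"
      using App rA r'A by (auto intro!: eval_in[OF alg])
    then show ?case using compat[OF _ _ _ _ _ l] App by simp
  qed
  then have R: "Rel I \<alpha>s H (eval I \<rho> t) (eval I \<rho>' t)" using wt by blast
  have "eval I \<rho>' t = eval I \<rho> (subst (\<lambda>v. if v \<in> Y then zero else Var v) t)"
    unfolding eval_subst \<rho>'_def using facts by (intro eval_cong) (auto simp: eval_zero)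
  also have "\<dots> = eval I \<rho> zero" using et rA by (intro sound) auto
  also have "\<dots> = z0 I zero" using facts by (simp add: eval_zero)
  finally have "Rel I \<alpha>s H (eval I \<rho> t) (z0 I zero)" using R by simp
  moreover have "eval I \<rho> t \<in> A" using wt rA by (intro eval_in[OF alg]) auto
  ultimately show "eval I \<rho> t \<in> H" using H4 by blast
qed

end

end


lemma ideal_mono: "ideal_term ar F \<Sigma> zero t Y \<Longrightarrow> F \<subseteq> G \<Longrightarrow> \<Sigma> \<subseteq> E \<Longrightarrow> ideal_term ar G E zero t Y"
  unfolding ideal_term_def
proof (elim conjE, intro conjI)
  assume a: "F \<subseteq> G" "\<Sigma> \<subseteq> E" "wf_trm ar F t"
  show "wf_trm ar G t" by (rule wf_mono[OF a(1) a(3)])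
next
  assume a: "F \<subseteq> G" "\<Sigma> \<subseteq> E" "eqc ar F \<Sigma> (subst (\<lambda>v. if v \<in> Y then zero else Var v) t) zero"
  show "eqc ar G E (subst (\<lambda>v. if v \<in> Y then zero else Var v) t) zero"
    by (rule eqc_mono[OF a(3) a(1) a(2)])
qed

lemma gen:
  fixes ar :: "'f \<Rightarrow> nat"
    and F F' :: "'f set"
    and \<Sigma> \<Sigma>' :: "('f trm \<times> 'f trm) set"
    and zero \<theta> :: "'f trm" and \<alpha>s :: "'f trm list" and n :: nat
    and T X :: "('f trm \<times> nat set) set"
  assumes FF: "F \<subseteq> F'" and SS: "\<Sigma> \<subseteq> \<Sigma>'"
    and B: "bit_speciale ar F \<Sigma> zero \<alpha>s \<theta> n"
    and DT: "determines_ideals TYPE('a) ar F \<Sigma> zero T"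
    and X1: "\<And>t Y. (t, Y) \<in> X \<Longrightarrow> ideal_term ar F' \<Sigma>' zero t Y"
    and X2: "\<And>(A::'a set) I H f xs ys. is_alg ar F' A I \<Longrightarrow> satisfies A I \<Sigma>' \<Longrightarrow> H \<subseteq> A
       \<Longrightarrow> (\<And>t Y. ideal_term ar F \<Sigma> zero t Y \<Longrightarrow> closed_under I A H t Y)
       \<Longrightarrow> (\<forall>(t, Y)\<in>X. closed_under I A H t Y) \<Longrightarrow> f \<in> F' - F
       \<Longrightarrow> length xs = ar f \<Longrightarrow> length ys = ar f \<Longrightarrow> set xs \<subseteq> A \<Longrightarrow> set ys \<subseteq> A
       \<Longrightarrow> list_all2 (Rel I \<alpha>s H) xs ys \<Longrightarrow> Rel I \<alpha>s H (I f xs) (I f ys)"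
  shows "determines_ideals TYPE('a) ar F' \<Sigma>' zero (T \<union> X)"
proof -
  have Tid: "\<forall>(t, Y)\<in>T. ideal_term ar F \<Sigma> zero t Y"
    and HT: "\<And>(A::'a set) I. variety_alg ar F \<Sigma> A I \<Longrightarrow> (\<forall>H. H \<noteq> {} \<longrightarrow> H \<subseteq> A \<longrightarrow>
           (is_ideal ar F \<Sigma> zero A I H \<longleftrightarrow> (\<forall>(t, Y)\<in>T. closed_under I A H t Y)))"
    using DT unfolding determines_ideals_def by auto
  have C1': "ideal_term ar F' \<Sigma>' zero t Y" if "(t, Y) \<in> T \<union> X" for t Y
  proof (cases "(t, Y) \<in> T")
    case True
    then have "ideal_term ar F \<Sigma> zero t Y" using Tid by auto
    then show ?thesis using ideal_mono[OF _ FF SS] by blast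
  next
    case False
    then show ?thesis using that X1 by blast
  qed
  then have C1: "\<forall>(t, Y)\<in>T \<union> X. ideal_term ar F' \<Sigma>' zero t Y" by auto
  have C2: "is_ideal ar F' \<Sigma>' zero A I H \<longleftrightarrow> (\<forall>(t, Y)\<in>T \<union> X. closed_under I A H t Y)"
    if va: "variety_alg ar F' \<Sigma>' A I" and Hne: "H \<noteq> {}" and Hsub: "H \<subseteq> A"
    for A :: "'a set" and I H
  proof
    assume "is_ideal ar F' \<Sigma>' zero A I H"
    then have "\<And>t Y. ideal_term ar F' \<Sigma>' zero t Y \<Longrightarrow> closed_under I A H t Y"
      unfolding is_ideal_def by blast
    then have "closed_under I A H t Y" if "(t, Y) \<in> T \<union> X" for t Y
      using C1'[OF that] by blast
    then show "\<forall>(t, Y)\<in>T \<union> X. closed_under I A H t Y" by auto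
  next
    assume cl: "\<forall>(t, Y)\<in>T \<union> X. closed_under I A H t Y"
    have alg: "is_alg ar F' A I" and sat: "satisfies A I \<Sigma>'" using va by (auto simp: variety_alg_def)
    have "is_alg ar F A I" using alg FF unfolding is_alg_def by auto
    moreover have "satisfies A I \<Sigma>" using sat SS unfolding satisfies_def by auto
    ultimately have vaF: "variety_alg ar F \<Sigma> A I" unfolding variety_alg_def by simp
    have clT: "\<forall>(t, Y)\<in>T. closed_under I A H t Y" using cl by blast
    have clX: "\<forall>(t, Y)\<in>X. closed_under I A H t Y" using cl by blast
    have "is_ideal ar F \<Sigma> zero A I H"
      using HT[OF vaF] Hne Hsub clT by simp
    then have Hid: "\<And>t Y. ideal_term ar F \<Sigma> zero t Y \<Longrightarrow> closed_under I A H t Y"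
      unfolding is_ideal_def by blast
    have compat: "Rel I \<alpha>s H (I f xs) (I f ys)"
      if "f \<in> F'" "length xs = ar f" "length ys = ar f" "set xs \<subseteq> A" "set ys \<subseteq> A"
         "list_all2 (Rel I \<alpha>s H) xs ys" for f xs ys
    proof (cases "f \<in> F")
      case True
      have cli: "\<And>i. i < n \<Longrightarrow> closed_under I A H (ta ar \<alpha>s \<theta> n f i) {ar f..<ar f + ar f * n}"
        by (rule Hid[OF IT_a[OF B True]])
      show ?thesis
        by (rule C_a[OF B FF SS alg sat Hsub Hid that(1) cli that(2) that(4) that(3) that(5) that(6)])
    next
      case False
      then have "f \<in> F' - F" using that(1) by blast
      note X2' = X2[OF alg sat Hsub Hid clX this that(2-6)]
      then show ?thesis .
    qed
    have "\<And>t Y. ideal_term ar F' \<Sigma>' zero t Y \<Longrightarrow> closed_under I A H t Y"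
      by (rule main[OF B FF SS alg sat Hsub Hid compat])
    then show "is_ideal ar F' \<Sigma>' zero A I H" unfolding is_ideal_def using Hne Hsub by blast
  qed
  show ?thesis unfolding determines_ideals_def
  proof (intro conjI allI impI)
    show "\<forall>(t, Y)\<in>T \<union> X. ideal_term ar F' \<Sigma>' zero t Y" by (rule C1)
  next
    fix A :: "'a set" and I H
    assume "variety_alg ar F' \<Sigma>' A I" "H \<noteq> {}" "H \<subseteq> A"
    then show "is_ideal ar F' \<Sigma>' zero A I H = (\<forall>(t, Y)\<in>T \<union> X. closed_under I A H t Y)"
      by (rule C2)
  qed
qed

theorem corollary2p9:
  fixes ar :: "'f \<Rightarrow> nat"
    and F F' :: "'f set"
    and \<Sigma> \<Sigma>' :: "('f trm \<times> 'f trm) set"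
    and zero \<theta> :: "'f trm" and \<alpha>s :: "'f trm list" and n :: nat
    and T :: "('f trm \<times> nat set) set"
  assumes "F \<subseteq> F'" and "\<Sigma> \<subseteq> \<Sigma>'"
    and "\<forall>(s, t)\<in>\<Sigma>. wf_trm ar F s \<and> wf_trm ar F t"
    and "\<forall>(s, t)\<in>\<Sigma>'. wf_trm ar F' s \<and> wf_trm ar F' t"
    and "bit_speciale ar F \<Sigma> zero \<alpha>s \<theta> n"
    and "determines_ideals TYPE('a) ar F \<Sigma> zero T"
  shows "determines_ideals TYPE('a) ar F' \<Sigma>' zero (T \<union> terms_a ar F F' \<alpha>s \<theta> n) \<and>
         determines_ideals TYPE('a) ar F' \<Sigma>' zero (T \<union> terms_b ar F F' \<alpha>s \<theta> n)"
proof
  note FF = assms(1) and SS = assms(2) and B = assms(5) and DT = assms(6)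
  have B': "bit_speciale ar F' \<Sigma>' zero \<alpha>s \<theta> n" using bit_mono[OF B FF SS] .
  show "determines_ideals TYPE('a) ar F' \<Sigma>' zero (T \<union> terms_a ar F F' \<alpha>s \<theta> n)"
  proof (rule gen[OF FF SS B DT])
    fix t Y assume "(t, Y) \<in> terms_a ar F F' \<alpha>s \<theta> n"
    then show "ideal_term ar F' \<Sigma>' zero t Y" unfolding terms_a_eq using IT_a[OF B'] by blast
  next
    fix A :: "'a set" and I H f xs ys
    assume alg: "is_alg ar F' A I" and sat: "satisfies A I \<Sigma>'" and Hsub: "H \<subseteq> A"
      and Hid: "\<And>t Y. ideal_term ar F \<Sigma> zero t Y \<Longrightarrow> closed_under I A H t Y"
      and cl: "\<forall>(t, Y)\<in>terms_a ar F F' \<alpha>s \<theta> n. closed_under I A H t Y" and f: "f \<in> F' - F"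
      and r: "length xs = ar f" "length ys = ar f" "set xs \<subseteq> A" "set ys \<subseteq> A"
         "list_all2 (Rel I \<alpha>s H) xs ys"
    have cli: "closed_under I A H (ta ar \<alpha>s \<theta> n f i) {ar f..<ar f + ar f * n}" if i: "i < n" for i
    proof -
      have "(ta ar \<alpha>s \<theta> n f i, {ar f..<ar f + ar f * n}) \<in> terms_a ar F F' \<alpha>s \<theta> n"
        unfolding terms_a_eq using f i by blast
      then show ?thesis using bspec[OF cl] by fastforce
    qed
    have fF: "f \<in> F'" using f by blast
    show "Rel I \<alpha>s H (I f xs) (I f ys)"
      by (rule C_a[OF B FF SS alg sat Hsub Hid fF cli r(1) r(3) r(2) r(4) r(5)])
  qed
  show "determines_ideals TYPE('a) ar F' \<Sigma>' zero (T \<union> terms_b ar F F' \<alpha>s \<theta> n)"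
  proof (rule gen[OF FF SS B DT])
    fix t Y assume "(t, Y) \<in> terms_b ar F F' \<alpha>s \<theta> n"
    then show "ideal_term ar F' \<Sigma>' zero t Y" unfolding terms_b_eq using IT_b[OF B'] by blast
  next
    fix A :: "'a set" and I H f xs ys
    assume alg: "is_alg ar F' A I" and sat: "satisfies A I \<Sigma>'" and Hsub: "H \<subseteq> A"
      and Hid: "\<And>t Y. ideal_term ar F \<Sigma> zero t Y \<Longrightarrow> closed_under I A H t Y"
      and cl: "\<forall>(t, Y)\<in>terms_b ar F F' \<alpha>s \<theta> n. closed_under I A H t Y" and f: "f \<in> F' - F"
      and r: "length xs = ar f" "length ys = ar f" "set xs \<subseteq> A" "set ys \<subseteq> A"
         "list_all2 (Rel I \<alpha>s H) xs ys"
    have cli: "closed_under I A H (tb ar \<alpha>s \<theta> n f i j) {ar f..<ar f + n}"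
      if i: "i < n" and j: "j < ar f" for i j
    proof -
      have "(tb ar \<alpha>s \<theta> n f i j, {ar f..<ar f + n}) \<in> terms_b ar F F' \<alpha>s \<theta> n"
        unfolding terms_b_eq using f i j by blast
      then show ?thesis using bspec[OF cl] by fastforce
    qed
    have fF: "f \<in> F'" using f by blast
    show "Rel I \<alpha>s H (I f xs) (I f ys)"
      by (rule C_b[OF B FF SS alg sat Hsub Hid fF cli r(1) r(3) r(2) r(4) r(5)])
  qed
qed

end
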